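(* Let $n\ge1$, $q$ a prime power, and $\mathcal{F}$ a covering of $[n]$ with no redundant basic set. If there are $A,B\in\mathcal{F}$ with $|A|\neq|B|$, then the $\mathcal{F}$-combinatorial metric does not satisfy the MacWilliams Extension Property.
   Context: For a covering $\mathcal{F}$ of $[n]$ (subsets called basic sets, union $[n]$) and $x\in\mathbb{F}_q^n$, $\mathrm{wt}_{\mathcal{F}}(x)=\min\{|\mathcal{A}|:\mathcal{A}\subset\mathcal{F},\ \mathrm{supp}(x)\subset\bigcup_{A\in\mathcal{A}}A\}$ with $\mathrm{supp}(x)=\{i:x_i\ne0\}$, and $d_{\mathcal{F}}(x,y)=\mathrm{wt}_{\mathcal{F}}(x-y)$. A basic set is redundant if properly contained in another. A local $\mathcal{F}$-equivalence between linear codes $\mathcal{C}_1,\mathcal{C}_2\subset\mathbb{F}_q^n$ is a linear map $t:\mathcal{C}_1\to\mathcal{C}_2$ with $\mathrm{wt}_{\mathcal{F}}(t(c))=\mathrm{wt}_{\mathcal{F}}(c)$ for all $c\in\mathcal{C}_1$. The metric $d_{\mathcal{F}}$ satisfies the MacWilliams Extension Property if for all linear codes $\mathcal{C}_1,\mathcal{C}_2$, every local $\mathcal{F}$-equivalence $t:\mathcal{C}_1\to\mathcal{C}_2$ extends to a linear isometry $T$ of $(\mathbb{F}_q^n,d_{\mathcal{F}})$, i.e. $T(c)=t(c)$ for all $c\in\mathcal{C}_1$. *)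

theory Defs
  imports "HOL-Analysis.Analysis"
begin

text \<open>Ambient space: F_q^n rendered as ('a::{field,finite})^'n with 'n a finite index type
  (so [n] is UNIV :: 'n set, n = CARD('n) >= 1). Scalar multiplication is (*s).\<close>

definition supp :: "('a::zero)^'n \<Rightarrow> 'n set" where
  "supp x = {i. x $ i \<noteq> 0}"

definition is_covering :: "'n set set \<Rightarrow> bool" where
  "is_covering F \<longleftrightarrow> \<Union>F = UNIV"

definition no_redundant :: "'n set set \<Rightarrow> bool" where
  "no_redundant F \<longleftrightarrow> (\<forall>A\<in>F. \<not> (\<exists>B\<in>F. A \<subset> B))"

definition wtF :: "('n::finite) set set \<Rightarrow> ('a::zero)^'n \<Rightarrow> nat" where
  "wtF F x = (LEAST k. \<exists>\<A>. \<A> \<subseteq> F \<and> card \<A> = k \<and> supp x \<subseteq> \<Union>\<A>)"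

definition dF :: "('n::finite) set set \<Rightarrow> ('a::ab_group_add)^'n \<Rightarrow> 'a^'n \<Rightarrow> nat" where
  "dF F x y = wtF F (x - y)"

definition linear_code :: "(('a::field)^('n::finite)) set \<Rightarrow> bool" where
  "linear_code C \<longleftrightarrow> module.subspace ((*s)) C"

definition local_equiv ::
  "('n::finite) set set \<Rightarrow> (('a::field)^'n) set \<Rightarrow> ('a^'n) set \<Rightarrow> ('a^'n \<Rightarrow> 'a^'n) \<Rightarrow> bool" where
  "local_equiv F C1 C2 t \<longleftrightarrow>
     (\<forall>x\<in>C1. \<forall>y\<in>C1. t (x + y) = t x + t y) \<and>
     (\<forall>c. \<forall>x\<in>C1. t (c *s x) = c *s t x) \<and>
     t ` C1 \<subseteq> C2 \<and>
     (\<forall>c\<in>C1. wtF F (t c) = wtF F c)"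

definition linear_isometry :: "('n::finite) set set \<Rightarrow> (('a::field)^'n \<Rightarrow> 'a^'n) \<Rightarrow> bool" where
  "linear_isometry F T \<longleftrightarrow> Vector_Spaces.linear ((*s)) ((*s)) T \<and>
     (\<forall>x y. dF F (T x) (T y) = dF F x y)"

definition MacWilliams_EP :: "('n::finite) set set \<Rightarrow> ('a::{field,finite}) itself \<Rightarrow> bool" where
  "MacWilliams_EP F _ \<longleftrightarrow>
     (\<forall>(C1::('a^'n) set) C2 t. linear_code C1 \<longrightarrow> linear_code C2 \<longrightarrow> local_equiv F C1 C2 t \<longrightarrow>
        (\<exists>T. linear_isometry F T \<and> (\<forall>c\<in>C1. T c = t c)))"

end

theory Submission
  imports Defs
begin

lemma wt_attained:
  fixes F :: "('n::finite) set set" and x :: "('a::zero)^'n"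
  assumes "is_covering F"
  shows "\<exists>\<A>. \<A> \<subseteq> F \<and> card \<A> = wtF F x \<and> supp x \<subseteq> \<Union>\<A>"
  unfolding wtF_def
  by (rule LeastI_ex[where P="\<lambda>k. \<exists>\<A>. \<A> \<subseteq> F \<and> card \<A> = k \<and> supp x \<subseteq> \<Union>\<A>"])
     (use assms in \<open>auto simp: is_covering_def\<close>)

lemma wt_zero_iff:
  fixes F :: "('n::finite) set set" and x :: "('a::zero)^'n"
  assumes "is_covering F"
  shows "wtF F x = 0 \<longleftrightarrow> x = 0"
proof
  assume "wtF F x = 0"
  then obtain \<A> where "\<A> \<subseteq> F" "card \<A> = 0" "supp x \<subseteq> \<Union>\<A>"
    using wt_attained[OF assms, of x] by auto
  moreover have "finite \<A>" by simp
  ultimately have "supp x = {}" by auto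
  then show "x = 0" by (auto simp: supp_def vec_eq_iff)
next
  assume "x = 0"
  then have "\<exists>\<A>. \<A> \<subseteq> F \<and> card \<A> = 0 \<and> supp x \<subseteq> \<Union>\<A>"
    by (intro exI[of _ "{}"]) (auto simp: supp_def)
  then show "wtF F x = 0" unfolding wtF_def by (rule Least_eq_0)
qed

lemma wt_le1:
  fixes F :: "('n::finite) set set" and x :: "('a::zero)^'n"
  assumes "C \<in> F" "supp x \<subseteq> C"
  shows "wtF F x \<le> 1"
proof -
  have "\<exists>\<A>. \<A> \<subseteq> F \<and> card \<A> = 1 \<and> supp x \<subseteq> \<Union>\<A>"
    using assms by (intro exI[of _ "{C}"]) auto
  then show ?thesis unfolding wtF_def by (rule Least_le)
qed

lemma wt_le1_D:
  fixes F :: "('n::finite) set set" and x :: "('a::zero)^'n"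
  assumes "is_covering F" "wtF F x \<le> 1" "x \<noteq> 0"
  shows "\<exists>C\<in>F. supp x \<subseteq> C"
proof -
  obtain \<A> where A: "\<A> \<subseteq> F" "card \<A> = wtF F x" "supp x \<subseteq> \<Union>\<A>"
    using wt_attained[OF assms(1), of x] by auto
  have "wtF F x \<noteq> 0" using wt_zero_iff[OF assms(1), of x] assms(3) by blast
  with assms(2) have "card \<A> = 1" using A by simp
  then obtain C where "\<A> = {C}" using card_1_singletonE by blast
  then show ?thesis using A by auto
qed

lemma main:
  fixes F :: "('n::finite) set set"
  assumes cov: "is_covering F"
    and nr: "no_redundant F"
    and AF: "A \<in> F" and BF: "B \<in> F" and lt: "card B < card A"
  shows "\<not> MacWilliams_EP F TYPE('a::{field,finite})"
proof
  assume mep: "MacWilliams_EP F TYPE('a)"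
  obtain f where f: "inj_on f B" "f ` B \<subseteq> A"
    using card_le_inj[of B A] lt by auto
  have "f ` B \<noteq> A" using lt card_image[OF f(1)] by auto
  then obtain a0 where a0: "a0 \<in> A" "a0 \<notin> f ` B" using f(2) by auto
  define VB where "VB = {v::'a^'n. supp v \<subseteq> B}"
  define VA where "VA = {v::'a^'n. supp v \<subseteq> A}"
  define t where "t = (\<lambda>v::'a^'n. (\<chi> i. if i \<in> f ` B then v $ (inv_into B f i) else 0))"
  have t_supp: "supp (t v) \<subseteq> A" for v using f(2) by (auto simp: t_def supp_def)
  have t_a0: "t v $ a0 = 0" for v using a0 by (simp add: t_def)
  have t_zero: "t v = 0 \<longleftrightarrow> v = 0" if "v \<in> VB" for v
  proof
    assume "t v = 0"
    show "v = 0"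
    proof (rule ccontr)
      assume "v \<noteq> 0"
      then obtain b where "v $ b \<noteq> 0" by (auto simp: vec_eq_iff)
      moreover then have "b \<in> B" using that by (auto simp: VB_def supp_def)
      ultimately have "t v $ f b \<noteq> 0" using f(1) by (simp add: t_def)
      then show False using \<open>t v = 0\<close> by simp
    qed
  qed (simp add: t_def vec_eq_iff)
  have subVB: "vec.subspace VB"
    unfolding vec.subspace_def VB_def supp_def by (auto simp: subset_eq) (metis add.right_neutral)
  have subVA: "vec.subspace VA"
    unfolding vec.subspace_def VA_def supp_def by (auto simp: subset_eq) (metis add.right_neutral)
  have wtV: "wtF F v = (if v = 0 then 0 else 1)" if "supp v \<subseteq> C" "C \<in> F" for v :: "'a^'n" and C
    using wt_le1[OF that(2,1)] wt_zero_iff[OF cov, of v] by auto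
  have le: "local_equiv F VB VA t"
    unfolding local_equiv_def
  proof (intro conjI ballI allI)
    show "t (x + y) = t x + t y" for x y by (simp add: t_def vec_eq_iff)
    show "t (c *s x) = c *s t x" for c x by (simp add: t_def vec_eq_iff)
    show "t ` VB \<subseteq> VA" using t_supp by (auto simp: VA_def)
    show "wtF F (t c) = wtF F c" if "c \<in> VB" for c
      using wtV[OF t_supp AF, of c] wtV[of c B] that BF t_zero[OF that] by (simp add: VB_def)
  qed
  have lc: "linear_code VB" "linear_code VA" using subVB subVA by (simp_all add: linear_code_def)
  have "\<exists>T. linear_isometry F T \<and> (\<forall>c\<in>VB. T c = t c)"
    using mep[unfolded MacWilliams_EP_def, rule_format, OF lc le] .
  then obtain T where T: "linear_isometry F T" "\<forall>c\<in>VB. T c = t c" by blast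
  have lin: "Vector_Spaces.linear (*s) (*s) T" and iso: "\<And>x y. dF F (T x) (T y) = dF F x y"
    using T(1) unfolding linear_isometry_def by auto
  interpret L: Vector_Spaces.linear "(*s)" "(*s)" T by (rule lin)
  have Tadd: "T (x + y) = T x + T y" for x y by (rule L.add)
  have T0: "T 0 = 0" by (rule L.zero)
  have wtT: "wtF F (T x) = wtF F x" for x
    using iso[of x 0] T0 by (simp add: dF_def)
  have "inj T"
  proof (rule injI)
    fix x y assume "T x = T y"
    then have "wtF F (x - y) = wtF F (0::'a^'n)" using iso[of x y] by (simp add: dF_def)
    then have "wtF F (x - y) = 0" using wt_zero_iff[OF cov, of "0::'a^'n"] by simp
    then show "x = y" using wt_zero_iff[OF cov, of "x - y"] by simp
  qed
  then have "surj T" by (intro finite_UNIV_inj_surj) simp_all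
  define ea :: "'a^'n" where "ea = (\<chi> i. if i = a0 then 1 else 0)"
  obtain u where u: "T u = ea" using surjD[OF \<open>surj T\<close>, of ea] by blast
  have "u \<notin> VB"
  proof
    assume "u \<in> VB"
    then have "T u $ a0 = 0" using T(2) t_a0 by simp
    then show False using u by (simp add: ea_def)
  qed
  then obtain j where j: "j \<notin> B" "u $ j \<noteq> 0" by (auto simp: VB_def supp_def)
  define v :: "'a^'n" where "v = (\<chi> i. if i \<in> B \<and> u $ i = 0 then 1 else 0)"
  have vVB: "v \<in> VB" by (auto simp: v_def VB_def supp_def)
  define w where "w = u + v"
  have Tw: "T w = ea + t v" using Tadd T(2) vVB u by (simp add: w_def)
  have "supp (ea + t v) \<subseteq> A" using t_supp[of v] a0 by (auto simp: supp_def ea_def)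
  then have "wtF F (T w) \<le> 1" unfolding Tw by (rule wt_le1[OF AF])
  then have "wtF F w \<le> 1" by (simp only: wtT)
  moreover have wj: "w $ j \<noteq> 0" using j by (simp add: w_def v_def)
  moreover then have "w \<noteq> 0" by auto
  ultimately obtain C where C: "C \<in> F" "supp w \<subseteq> C" using wt_le1_D[OF cov] by blast
  have "B \<subseteq> supp w"
  proof
    fix i assume "i \<in> B"
    then show "i \<in> supp w" by (cases "u $ i = 0") (auto simp: w_def v_def supp_def)
  qed
  moreover have "j \<in> supp w" using wj by (simp add: supp_def)
  ultimately have "B \<subset> C" using C j by blast
  moreover have "\<not> B \<subset> C" using nr BF C(1) unfolding no_redundant_def by blast
  ultimately show False by simp
qed

theorem proposition7:
  fixes F :: "('n::finite) set set"
  assumes "is_covering F"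
    and "no_redundant F"
    and "A \<in> F" and "B \<in> F" and "card A \<noteq> card B"
  shows "\<not> MacWilliams_EP F TYPE('a::{field,finite})"
proof (cases "card B < card A")
  case True
  then show ?thesis by (rule main[OF assms(1,2,3,4)])
next
  case False
  then have "card A < card B" using assms(5) by simp
  then show ?thesis by (rule main[OF assms(1,2,4,3)])
qed

end
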